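(* Let $J,L\subseteq S$ with $n:=\#J\ge2$, $L\setminus\{l_1\}=J\setminus\{j_1,j_2\}$ and $j_1<l_1<j_2$. Then in $A$: $$\tau^-_J-(t_{j_2}t_{l_1}+t_{l_1}t_{j_2}-2q)\tau^-_{L\setminus\{l_1\}}-\tau^-_{\{j_1,j_2\}}\tau^-_L+\sum_{i=3}^n(-1)^{i+1}\tau^-_{(J\cup L)\setminus\{j_i\}}=0.$$
   Context: $S$ is a finite set with a total order $<$, $R$ a commutative ring with $1$, $q\in R$, $A=R\langle t_s\mid s\in S\rangle$ the free associative algebra. Subsets are enumerated increasingly: $J=\{j_1<\dots<j_{\#J}\}$, $L=\{l_1<\dots\}$. $t_J=t_{j_1}\cdots t_{j_{\#J}}$; for $I=\{j_{\alpha_1}<\dots<j_{\alpha_{\#I}}\}\subseteq J$, $\ell_J(I)=\sum_\nu(\alpha_\nu-\nu)$; $\tau^-_J=\sum_{I\subseteq J,\ \#I\text{ odd}}(-1)^{\ell_J(I)}(-q)^{(\#I-1)/2}t_{J\setminus I}$. *)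

theory Defs
  imports "HOL-Library.Poly_Mapping"
begin

text \<open>The free associative algebra R<t_s | s in S> is modelled as finitely supported
  R-linear combinations of words over S: the type ('s list poly_mapping type.
  Addition/subtraction are the pointwise ones of poly_mapping; the product is
  concatenation of words extended bilinearly.\<close>

type_synonym ('s, 'r) freealg = "'s list \<Rightarrow>\<^sub>0 'r"

definition amult :: "('s, 'r::comm_ring_1) freealg \<Rightarrow> ('s, 'r) freealg \<Rightarrow> ('s, 'r) freealg"
  (infixl "\<star>" 70) where
  "p \<star> q = (\<Sum>u\<in>Poly_Mapping.keys p. \<Sum>v\<in>Poly_Mapping.keys q. Poly_Mapping.single (u @ v) (Poly_Mapping.lookup p u * Poly_Mapping.lookup q v))"

text \<open>Scalars c \<in> R, embedded as c times the empty word (the unit 1 of A).\<close>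
definition ascal :: "'r::comm_ring_1 \<Rightarrow> ('s, 'r) freealg" where
  "ascal c = Poly_Mapping.single [] c"

definition asmult :: "'r::comm_ring_1 \<Rightarrow> ('s, 'r) freealg \<Rightarrow> ('s, 'r) freealg" where
  "asmult c p = Poly_Mapping.map (\<lambda>x. c * x) p"

definition gen :: "'s \<Rightarrow> ('s, 'r::comm_ring_1) freealg" where
  "gen s = Poly_Mapping.single [s] 1"

definition tmon :: "'s::linorder set \<Rightarrow> ('s, 'r::comm_ring_1) freealg" where
  "tmon J = Poly_Mapping.single (sorted_list_of_set J) 1"

text \<open>i-th element (1-based) of J in increasing order: j_i\<close>
definition enum :: "'s::linorder set \<Rightarrow> nat \<Rightarrow> 's" where
  "enum J i = sorted_list_of_set J ! (i - 1)"

text \<open>ell_J(I) = sum_nu (alpha_nu - nu) where I = {j_{alpha_1} < ... < j_{alpha_#I}}\<close>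
definition ell :: "'s::linorder set \<Rightarrow> 's set \<Rightarrow> nat" where
  "ell J I = (\<Sum>\<nu>=1..card I. (THE \<alpha>. \<alpha> \<in> {1..card J} \<and> enum J \<alpha> = enum I \<nu>) - \<nu>)"

definition tau_minus :: "'r::comm_ring_1 \<Rightarrow> 's::linorder set \<Rightarrow> ('s, 'r) freealg" where
  "tau_minus q J = (\<Sum>I\<in>{I. I \<subseteq> J \<and> odd (card I)}.
      asmult ((-1) ^ ell J I * (- q) ^ ((card I - 1) div 2)) (tmon (J - I)))"

end

theory Submission
  imports Defs
begin

instantiation list :: (type) monoid_add
begin
definition zero_list_def: "0 = []"
definition plus_list_def: "xs + ys = xs @ ys"
instance by standard (simp_all add: zero_list_def plus_list_def)
end

lemma pm_sum_single: "(p::'a \<Rightarrow>\<^sub>0 'b::comm_monoid_add) = (\<Sum>k\<in>Poly_Mapping.keys p. Poly_Mapping.single k (Poly_Mapping.lookup p k))"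
  by (rule poly_mapping_eqI) (simp add: lookup_sum lookup_single when_def in_keys_iff)

lemma amult_eq: "(p::('s,'r::comm_ring_1) freealg) \<star> q = p * q"
proof -
  have "p * q = (\<Sum>u\<in>Poly_Mapping.keys p. Poly_Mapping.single u (Poly_Mapping.lookup p u)) *
     (\<Sum>v\<in>Poly_Mapping.keys q. Poly_Mapping.single v (Poly_Mapping.lookup q v))"
    using pm_sum_single[of p] pm_sum_single[of q] by simp
  also have "\<dots> = p \<star> q"
    by (simp add: amult_def sum_distrib_left sum_distrib_right mult_single plus_list_def sum.swap[of _ "Poly_Mapping.keys q"])
  finally show ?thesis by simp
qed

lemma asmult_eq: "asmult c (p::('s,'r::comm_ring_1) freealg) = Poly_Mapping.single [] c * p"
  unfolding asmult_def using mult_map_scale_conv_mult[of c p] by (simp add: zero_list_def)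

lemma scal_central: "Poly_Mapping.single [] c * (p::('s,'r::comm_ring_1) freealg) = p * Poly_Mapping.single [] c"
proof -
  have "p * Poly_Mapping.single [] c = (\<Sum>k\<in>Poly_Mapping.keys p. Poly_Mapping.single k (Poly_Mapping.lookup p k)) * Poly_Mapping.single [] c"
    using pm_sum_single[of p] by simp
  also have "\<dots> = Poly_Mapping.single [] c * (\<Sum>k\<in>Poly_Mapping.keys p. Poly_Mapping.single k (Poly_Mapping.lookup p k))"
    by (simp add: sum_distrib_left sum_distrib_right mult_single plus_list_def mult.commute)
  finally show ?thesis using pm_sum_single[of p] by simp
qed

lemma asmult_mult_right: "asmult c (x * (y::('s,'r::comm_ring_1) freealg)) = x * asmult c y"
  by (simp add: asmult_eq mult.assoc[symmetric] scal_central del: scal_central) (metis mult.assoc scal_central)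

lemma asmult_sum: "asmult c (sum f A) = sum (\<lambda>i. asmult c (f i)) (A::'i set)"
  by (simp add: asmult_eq sum_distrib_left)

lemma asmult_asmult: "asmult c (asmult d p) = asmult (c*d) (p::('s,'r::comm_ring_1) freealg)"
  by (simp add: asmult_eq mult.assoc[symmetric] mult_single zero_list_def[symmetric])

lemma asmult_neg: "asmult (-c) p = - asmult c (p::('s,'r::comm_ring_1) freealg)"
  by (simp add: asmult_eq single_uminus)

lemma asmult_one: "asmult 1 p = (p::('s,'r::comm_ring_1) freealg)"
  by (simp add: asmult_eq zero_list_def[symmetric])

lemma sl_insert_min:
  assumes "finite X" "\<forall>y\<in>X. x < y"
  shows "sorted_list_of_set (insert x X) = x # sorted_list_of_set X"
proof -
  have "x \<notin> X" using assms by auto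
  then have "sorted_list_of_set (insert x X) = insort x (sorted_list_of_set X)"
    using assms by (simp add: sorted_list_of_set_insert)
  also have "\<dots> = x # sorted_list_of_set X"
  proof -
    have "\<forall>y\<in>set (sorted_list_of_set X). x < y" using assms by simp
    then show ?thesis by (cases "sorted_list_of_set X") auto
  qed
  finally show ?thesis .
qed

lemma enum_in: "finite J \<Longrightarrow> \<nu> \<in> {1..card J} \<Longrightarrow> enum J \<nu> \<in> J"
  unfolding enum_def
  by (metis Suc_le_eq Suc_pred' atLeastAtMost_iff le_less_Suc_eq length_sorted_list_of_set
      less_eq_Suc_le nth_mem set_sorted_list_of_set zero_less_one order_less_le_trans not_le)

lemma enum_inj: "finite J \<Longrightarrow> a \<in> {1..card J} \<Longrightarrow> b \<in> {1..card J} \<Longrightarrow> enum J a = enum J b \<Longrightarrow> a = b"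
  unfolding enum_def
proof -
  assume "finite J" "a \<in> {1..card J}" "b \<in> {1..card J}"
    "sorted_list_of_set J ! (a - 1) = sorted_list_of_set J ! (b - 1)"
  then have "a - 1 = b - 1"
    using nth_eq_iff_index_eq[OF distinct_sorted_list_of_set, of "a-1" J "b-1"] by auto
  then show "a = b" using \<open>a \<in> {1..card J}\<close> \<open>b \<in> {1..card J}\<close> by auto
qed

lemma enum_image: "finite J \<Longrightarrow> enum J ` {1..card J} = J"
proof -
  assume f: "finite J"
  let ?xs = "sorted_list_of_set J"
  have "enum J ` {1..card J} = (\<lambda>i. ?xs ! i) ` {0..<length ?xs}"
  proof (rule set_eqI, rule iffI)
    fix z assume "z \<in> enum J ` {1..card J}"
    then obtain a where "a \<in> {1..card J}" "z = enum J a" by auto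
    then show "z \<in> (\<lambda>i. ?xs ! i) ` {0..<length ?xs}"
      by (auto simp: enum_def intro!: image_eqI[of _ _ "a - 1"])
  next
    fix z assume "z \<in> (\<lambda>i. ?xs ! i) ` {0..<length ?xs}"
    then obtain i where "i < length ?xs" "z = ?xs ! i" by auto
    then show "z \<in> enum J ` {1..card J}"
      by (auto simp: enum_def intro!: image_eqI[of _ _ "i + 1"])
  qed
  also have "\<dots> = set ?xs" by (simp add: atLeast0LessThan set_conv_nth image_def) (auto)
  finally show ?thesis using f by simp
qed

lemma pos_enum: "finite J \<Longrightarrow> \<nu> \<in> {1..card J} \<Longrightarrow>
   (THE \<alpha>. \<alpha> \<in> {1..card J} \<and> enum J \<alpha> = enum J \<nu>) = \<nu>"
  by (rule the_equality) (auto dest: enum_inj)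

lemma pos_card:
  assumes f: "finite J" and y: "y \<in> J"
  shows "(THE \<alpha>. \<alpha> \<in> {1..card J} \<and> enum J \<alpha> = y) = card {z\<in>J. z \<le> y}"
proof -
  let ?xs = "sorted_list_of_set J"
  have sw: "sorted_wrt (<) ?xs" by (rule strict_sorted_list_of_set)
  have len: "length ?xs = card J" by simp
  from y f obtain i where i: "i < length ?xs" "?xs ! i = y"
    by (metis in_set_conv_nth set_sorted_list_of_set)
  have e: "enum J (i+1) = y" using i by (simp add: enum_def)
  have th: "(THE \<alpha>. \<alpha> \<in> {1..card J} \<and> enum J \<alpha> = y) = i + 1"
    using pos_enum[OF f, of "i+1"] e i len by auto
  have "{z\<in>J. z \<le> y} = (\<lambda>k. ?xs ! k) ` {0..i}"
  proof (rule set_eqI, rule iffI)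
    fix z assume z: "z \<in> {z\<in>J. z \<le> y}"
    then have "z \<in> set ?xs" using f by simp
    then obtain k where k: "k < length ?xs" "?xs ! k = z" by (metis in_set_conv_nth)
    have "k \<le> i"
    proof (rule ccontr)
      assume "\<not> k \<le> i"
      then have "?xs ! i < ?xs ! k" using sorted_wrt_nth_less[OF sw, of i k] k by simp
      then show False using z k i by auto
    qed
    then show "z \<in> (\<lambda>k. ?xs ! k) ` {0..i}" using k by auto
  next
    fix z assume "z \<in> (\<lambda>k. ?xs ! k) ` {0..i}"
    then obtain k where k: "k \<le> i" "z = ?xs ! k" by auto
    have "z \<le> y"
    proof (cases "k = i")
      case True then show ?thesis using k i by simp
    next
      case False then have "?xs ! k < ?xs ! i" using sorted_wrt_nth_less[OF sw, of k i] k i by simp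
      then show ?thesis using k i by simp
    qed
    moreover have "z \<in> J" using k i f by (metis le_less_trans nth_mem set_sorted_list_of_set)
    ultimately show "z \<in> {z\<in>J. z \<le> y}" by simp
  qed
  moreover have "card ((\<lambda>k. ?xs ! k) ` {0..i}) = i + 1"
  proof (subst card_image)
    show "inj_on (\<lambda>k. ?xs ! k) {0..i}"
      using i by (auto simp: inj_on_def nth_eq_iff_index_eq[OF distinct_sorted_list_of_set])
  qed simp
  ultimately show ?thesis using th by simp
qed

lemma ell_inv:
  assumes f: "finite J" and I: "I \<subseteq> J"
  shows "ell J I = (\<Sum>y\<in>I. card {z\<in>J - I. z < y})"
proof -
  have fI: "finite I" using f I finite_subset by auto
  have "ell J I = (\<Sum>\<nu>=1..card I. card {z\<in>J - I. z < enum I \<nu>})"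
    unfolding ell_def
  proof (rule sum.cong[OF refl])
    fix \<nu> assume nu: "\<nu> \<in> {1..card I}"
    let ?y = "enum I \<nu>"
    have yI: "?y \<in> I" using enum_in[OF fI nu] .
    have "(THE \<alpha>. \<alpha> \<in> {1..card J} \<and> enum J \<alpha> = ?y) = card {z\<in>J. z \<le> ?y}"
      using pos_card[OF f] yI I by auto
    moreover have "\<nu> = card {z\<in>I. z \<le> ?y}"
      using pos_card[OF fI yI] pos_enum[OF fI nu] by simp
    moreover have "card {z\<in>J. z \<le> ?y} - card {z\<in>I. z \<le> ?y} = card ({z\<in>J. z \<le> ?y} - {z\<in>I. z \<le> ?y})"
      by (rule card_Diff_subset[symmetric]) (use fI I in auto)
    moreover have "{z\<in>J. z \<le> ?y} - {z\<in>I. z \<le> ?y} = {z\<in>J - I. z < ?y}"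
      using yI by (auto simp: order_le_less)
    ultimately show "(THE \<alpha>. \<alpha> \<in> {1..card J} \<and> enum J \<alpha> = ?y) - \<nu> = card {z\<in>J - I. z < ?y}"
      by simp
  qed
  also have "\<dots> = (\<Sum>y\<in>I. card {z\<in>J - I. z < y})"
  proof (rule sum.reindex_cong[symmetric])
    show "inj_on (enum I) {1..card I}" using enum_inj[OF fI] by (auto simp: inj_on_def)
    show "I = enum I ` {1..card I}" using enum_image[OF fI] by simp
  qed simp
  finally show ?thesis .
qed


lemma ell_insert_out:
  assumes f: "finite X" and m: "\<forall>y\<in>X. x < y" and I: "I \<subseteq> X"
  shows "ell (insert x X) I = ell X I + card I"
proof -
  have xX: "x \<notin> X" using m by auto
  have fI: "finite I" using f I finite_subset by auto
  have "ell (insert x X) I = (\<Sum>y\<in>I. card {z\<in>insert x X - I. z < y})"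
    using ell_inv[of "insert x X" I] f I by auto
  also have "\<dots> = (\<Sum>y\<in>I. card {z\<in>X - I. z < y} + 1)"
  proof (rule sum.cong[OF refl])
    fix y assume y: "y \<in> I"
    have "{z\<in>insert x X - I. z < y} = insert x {z\<in>X - I. z < y}"
      using y I m xX by auto
    then show "card {z\<in>insert x X - I. z < y} = card {z\<in>X - I. z < y} + 1"
      using f xX by simp
  qed
  also have "\<dots> = ell X I + card I"
    unfolding ell_inv[OF f I] sum.distrib by simp
  finally show ?thesis .
qed

lemma ell_insert_in:
  assumes f: "finite X" and m: "\<forall>y\<in>X. x < y" and I: "I \<subseteq> X"
  shows "ell (insert x X) (insert x I) = ell X I"
proof -
  have xX: "x \<notin> X" using m by auto
  have xI: "x \<notin> I" using xX I by auto
  have fI: "finite I" using f I finite_subset by auto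
  have d: "insert x X - insert x I = X - I" using xX by auto
  have "ell (insert x X) (insert x I) = (\<Sum>y\<in>insert x I. card {z\<in>X - I. z < y})"
    using ell_inv[of "insert x X" "insert x I"] f I d by auto
  also have "\<dots> = card {z\<in>X - I. z < x} + (\<Sum>y\<in>I. card {z\<in>X - I. z < y})"
    using fI xI by simp
  also have "{z\<in>X - I. z < x} = {}" using m by auto
  finally show ?thesis using ell_inv[OF f I] by simp
qed

lemma split_odd:
  assumes f: "finite X" and xX: "x \<notin> X"
  shows "{I. I \<subseteq> insert x X \<and> odd (card I)} =
    {I. I \<subseteq> X \<and> odd (card I)} \<union> insert x ` {I. I \<subseteq> X \<and> even (card I)}"
proof (rule set_eqI, rule iffI)
  fix I assume "I \<in> {I. I \<subseteq> insert x X \<and> odd (card I)}"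
  then have I: "I \<subseteq> insert x X" "odd (card I)" by auto
  show "I \<in> {I. I \<subseteq> X \<and> odd (card I)} \<union> insert x ` {I. I \<subseteq> X \<and> even (card I)}"
  proof (cases "x \<in> I")
    case True
    have fI: "finite I" using I f finite_subset by auto
    have "card (I - {x}) = card I - 1" using True fI by simp
    moreover have "card I \<ge> 1" using I by (cases "card I") auto
    ultimately have "even (card (I - {x}))" using I by auto
    moreover have "I - {x} \<subseteq> X" using I by auto
    moreover have "I = insert x (I - {x})" using True by auto
    ultimately show ?thesis by blast
  next
    case False then show ?thesis using I by auto
  qed
next
  fix I assume "I \<in> {I. I \<subseteq> X \<and> odd (card I)} \<union> insert x ` {I. I \<subseteq> X \<and> even (card I)}"
  then show "I \<in> {I. I \<subseteq> insert x X \<and> odd (card I)}"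
  proof
    assume "I \<in> insert x ` {I. I \<subseteq> X \<and> even (card I)}"
    then obtain I' where "I' \<subseteq> X" "even (card I')" "I = insert x I'" by auto
    moreover have "finite I'" using \<open>I' \<subseteq> X\<close> f finite_subset by auto
    moreover have "x \<notin> I'" using \<open>I' \<subseteq> X\<close> xX by auto
    ultimately show ?thesis by auto
  qed auto
qed

lemma split_even:
  assumes f: "finite X" and xX: "x \<notin> X"
  shows "{I. I \<subseteq> insert x X \<and> even (card I)} =
    {I. I \<subseteq> X \<and> even (card I)} \<union> insert x ` {I. I \<subseteq> X \<and> odd (card I)}"
proof (rule set_eqI, rule iffI)
  fix I assume "I \<in> {I. I \<subseteq> insert x X \<and> even (card I)}"
  then have I: "I \<subseteq> insert x X" "even (card I)" by auto
  show "I \<in> {I. I \<subseteq> X \<and> even (card I)} \<union> insert x ` {I. I \<subseteq> X \<and> odd (card I)}"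
  proof (cases "x \<in> I")
    case True
    have fI: "finite I" using I f finite_subset by auto
    have "card (I - {x}) = card I - 1" using True fI by simp
    moreover have "card I \<ge> 1" using True fI by (auto simp: Suc_le_eq card_gt_0_iff)
    ultimately have "odd (card (I - {x}))" using I by auto
    moreover have "I - {x} \<subseteq> X" using I by auto
    moreover have "I = insert x (I - {x})" using True by auto
    ultimately show ?thesis by blast
  next
    case False then show ?thesis using I by auto
  qed
next
  fix I assume "I \<in> {I. I \<subseteq> X \<and> even (card I)} \<union> insert x ` {I. I \<subseteq> X \<and> odd (card I)}"
  then show "I \<in> {I. I \<subseteq> insert x X \<and> even (card I)}"
  proof
    assume "I \<in> insert x ` {I. I \<subseteq> X \<and> odd (card I)}"
    then obtain I' where "I' \<subseteq> X" "odd (card I')" "I = insert x I'" by auto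
    moreover have "finite I'" using \<open>I' \<subseteq> X\<close> f finite_subset by auto
    moreover have "x \<notin> I'" using \<open>I' \<subseteq> X\<close> xX by auto
    ultimately show ?thesis by auto
  qed auto
qed


definition sig_minus :: "'r::comm_ring_1 \<Rightarrow> 's::linorder set \<Rightarrow> ('s, 'r) freealg" where
  "sig_minus q J = (\<Sum>I\<in>{I. I \<subseteq> J \<and> even (card I)}.
      asmult ((-1) ^ ell J I * (- q) ^ (card I div 2)) (tmon (J - I)))"

lemma tmon_insert:
  assumes "finite Z" "\<forall>y\<in>Z. x < y"
  shows "(tmon (insert x Z) :: ('s::linorder,'r::comm_ring_1) freealg) = gen x * tmon Z"
  unfolding tmon_def gen_def sl_insert_min[OF assms] by (simp add: mult_single plus_list_def)

lemma tau_empty: "tau_minus q {} = 0"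
proof -
  have e: "{I. I \<subseteq> {} \<and> odd (card I)} = {}" by auto
  show ?thesis unfolding tau_minus_def e by simp
qed

lemma sig_empty: "sig_minus q {} = (1 :: ('s::linorder,'r::comm_ring_1) freealg)"
proof -
  have e: "{I. I \<subseteq> ({}::'s set) \<and> even (card I)} = {{}}" by auto
  have l: "ell ({}::'s set) {} = 0" by (simp add: ell_def)
  show ?thesis
    unfolding sig_minus_def e by (simp add: l asmult_one tmon_def zero_list_def[symmetric])
qed

lemma fin_subsets: "finite X \<Longrightarrow> finite {I. I \<subseteq> X \<and> P I}"
  by (rule finite_subset[of _ "{I. I \<subseteq> X}"]) (auto simp: finite_Collect_subsets)

lemma tau_insert:
  fixes q :: "'r::comm_ring_1"
  assumes f: "finite X" and m: "\<forall>y\<in>X. x < y"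
  shows "tau_minus q (insert x X) = - (gen x * tau_minus q X) + sig_minus q X"
proof -
  have xX: "x \<notin> X" using m by auto
  let ?O = "{I. I \<subseteq> X \<and> odd (card I)}"
  let ?E = "{I. I \<subseteq> X \<and> even (card I)}"
  let ?F = "\<lambda>I. asmult ((-1) ^ ell (insert x X) I * (- q) ^ ((card I - 1) div 2)) (tmon (insert x X - I))"
  have disj: "?O \<inter> insert x ` ?E = {}" using xX by auto
  have inj: "inj_on (insert x) ?E"
  proof (rule inj_onI)
    fix A B assume "A \<in> ?E" "B \<in> ?E" and eq: "insert x A = insert x B"
    then have "x \<notin> A" "x \<notin> B" using xX by auto
    then show "A = B" using eq by (metis Diff_insert_absorb)
  qed
  have "tau_minus q (insert x X) = sum ?F ?O + sum ?F (insert x ` ?E)"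
    unfolding tau_minus_def split_odd[OF f xX]
    by (rule sum.union_disjoint) (use f disj in \<open>auto intro: fin_subsets\<close>)
  also have "sum ?F (insert x ` ?E) = sum (\<lambda>I. ?F (insert x I)) ?E"
    by (rule sum.reindex_cong[OF inj refl refl])
  also have "\<dots> = sig_minus q X"
    unfolding sig_minus_def
  proof (rule sum.cong[OF refl])
    fix I assume I: "I \<in> ?E"
    have fI: "finite I" using I f finite_subset by auto
    have xI: "x \<notin> I" using I xX by auto
    have "insert x X - insert x I = X - I" using xX by auto
    moreover have "ell (insert x X) (insert x I) = ell X I" using ell_insert_in[OF f m] I by auto
    moreover have "card (insert x I) = Suc (card I)" using fI xI by simp
    ultimately show "?F (insert x I) = asmult ((-1) ^ ell X I * (- q) ^ (card I div 2)) (tmon (X - I))"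
      by simp
  qed
  also have "sum ?F ?O = - (gen x * tau_minus q X)"
    unfolding tau_minus_def sum_distrib_left sum_negf[symmetric]
  proof (rule sum.cong[OF refl])
    fix I assume I: "I \<in> ?O"
    have xI: "x \<notin> I" using I xX by auto
    have d: "insert x X - I = insert x (X - I)" using xI by auto
    have t: "tmon (insert x (X - I)) = (gen x * tmon (X - I) :: ('a,'r) freealg)"
      by (rule tmon_insert) (use f m in auto)
    have e: "ell (insert x X) I = ell X I + card I" using ell_insert_out[OF f m] I by auto
    have s: "(-1::'r) ^ ell (insert x X) I = - ((-1) ^ ell X I)"
      unfolding e power_add using I by simp
    show "?F I = - (gen x * asmult ((-1) ^ ell X I * (- q) ^ ((card I - 1) div 2)) (tmon (X - I)))"
      unfolding d t s by (simp add: asmult_neg asmult_mult_right)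
  qed
  finally show ?thesis by simp
qed

lemma sig_insert:
  fixes q :: "'r::comm_ring_1"
  assumes f: "finite X" and m: "\<forall>y\<in>X. x < y"
  shows "sig_minus q (insert x X) = gen x * sig_minus q X + asmult (- q) (tau_minus q X)"
proof -
  have xX: "x \<notin> X" using m by auto
  let ?O = "{I. I \<subseteq> X \<and> odd (card I)}"
  let ?E = "{I. I \<subseteq> X \<and> even (card I)}"
  let ?F = "\<lambda>I. asmult ((-1) ^ ell (insert x X) I * (- q) ^ (card I div 2)) (tmon (insert x X - I))"
  have disj: "?E \<inter> insert x ` ?O = {}" using xX by auto
  have inj: "inj_on (insert x) ?O"
  proof (rule inj_onI)
    fix A B assume "A \<in> ?O" "B \<in> ?O" and eq: "insert x A = insert x B"
    then have "x \<notin> A" "x \<notin> B" using xX by auto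
    then show "A = B" using eq by (metis Diff_insert_absorb)
  qed
  have "sig_minus q (insert x X) = sum ?F ?E + sum ?F (insert x ` ?O)"
    unfolding sig_minus_def split_even[OF f xX]
    by (rule sum.union_disjoint) (use f disj in \<open>auto intro: fin_subsets\<close>)
  also have "sum ?F (insert x ` ?O) = sum (\<lambda>I. ?F (insert x I)) ?O"
    by (rule sum.reindex_cong[OF inj refl refl])
  also have "\<dots> = asmult (- q) (tau_minus q X)"
    unfolding tau_minus_def asmult_sum
  proof (rule sum.cong[OF refl])
    fix I assume I: "I \<in> ?O"
    have fI: "finite I" using I f finite_subset by auto
    have xI: "x \<notin> I" using I xX by auto
    have "insert x X - insert x I = X - I" using xX by auto
    moreover have "ell (insert x X) (insert x I) = ell X I" using ell_insert_in[OF f m] I by auto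
    moreover have "card (insert x I) = Suc (card I)" using fI xI by simp
    moreover have "Suc (card I) div 2 = Suc ((card I - 1) div 2)" using I
      by (auto elim!: oddE)
    ultimately show "?F (insert x I) = asmult (- q) (asmult ((-1) ^ ell X I * (- q) ^ ((card I - 1) div 2)) (tmon (X - I)))"
      by (simp add: asmult_asmult mult_ac)
  qed
  also have "sum ?F ?E = gen x * sig_minus q X"
    unfolding sig_minus_def sum_distrib_left
  proof (rule sum.cong[OF refl])
    fix I assume I: "I \<in> ?E"
    have xI: "x \<notin> I" using I xX by auto
    have d: "insert x X - I = insert x (X - I)" using xI by auto
    have t: "tmon (insert x (X - I)) = (gen x * tmon (X - I) :: ('a,'r) freealg)"
      by (rule tmon_insert) (use f m in auto)
    have e: "ell (insert x X) I = ell X I + card I" using ell_insert_out[OF f m] I by auto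
    have s: "(-1::'r) ^ ell (insert x X) I = (-1) ^ ell X I"
      unfolding e power_add using I by simp
    show "?F I = gen x * asmult ((-1) ^ ell X I * (- q) ^ (card I div 2)) (tmon (X - I))"
      unfolding d t s by (simp add: asmult_mult_right)
  qed
  finally show ?thesis by simp
qed


lemma asmult_add: "asmult c (a + b) = asmult c a + asmult c (b::('s,'r::comm_ring_1) freealg)"
  by (simp add: asmult_eq distrib_left)

lemma asmult_diff: "asmult c (a - b) = asmult c a - asmult c (b::('s,'r::comm_ring_1) freealg)"
  by (simp add: asmult_eq right_diff_distrib)

lemma asmult_uminus: "asmult c (- a) = - asmult c (a::('s,'r::comm_ring_1) freealg)"
  by (simp add: asmult_eq)

lemma asmult_zero: "asmult c 0 = (0::('s,'r::comm_ring_1) freealg)"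
  by (simp add: asmult_eq)

lemma enum_insert_min1:
  assumes "finite X" "\<forall>y\<in>X. x < y"
  shows "enum (insert x X) 1 = x"
  unfolding enum_def sl_insert_min[OF assms] by simp

lemma enum_insert_min2:
  assumes "finite X" "\<forall>y\<in>X. x < y" "p \<ge> 1"
  shows "enum (insert x X) (Suc p) = enum X p"
  unfolding enum_def sl_insert_min[OF assms(1,2)] using assms(3) by (cases p) auto

lemma boundary:
  fixes q :: "'r::comm_ring_1"
  assumes "finite K"
  shows "(\<Sum>p=1..card K. asmult ((-1)^(p+1)) (tau_minus q (K - {enum K p}))) = (0::('s::linorder,'r) freealg) \<and>
         (\<Sum>p=1..card K. asmult ((-1)^(p+1)) (sig_minus q (K - {enum K p}))) = tau_minus q K"
  using assms
proof (induction "card K" arbitrary: K)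
  case 0
  then have "K = {}" by simp
  then show ?case by (simp add: tau_empty)
next
  case (Suc n K)
  define x where "x = Min K"
  define K' where "K' = K - {x}"
  have ne: "K \<noteq> {}" using Suc by auto
  have xK: "x \<in> K" using Min_in Suc ne x_def by auto
  have Kx: "K = insert x K'" using xK K'_def by auto
  have fK': "finite K'" using Suc K'_def by auto
  have m: "\<forall>y\<in>K'. x < y"
  proof
    fix y assume "y \<in> K'"
    then have "y \<in> K" "y \<noteq> x" using K'_def by auto
    moreover have "x \<le> y" using Min_le[OF \<open>finite K\<close> \<open>y \<in> K\<close>] x_def by simp
    ultimately show "x < y" by simp
  qed
  have cK': "card K' = n" using Suc xK K'_def by simp
  have IH: "(\<Sum>p=1..n. asmult ((-1)^(p+1)) (tau_minus q (K' - {enum K' p}))) = (0::('s,'r) freealg)"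
     "(\<Sum>p=1..n. asmult ((-1)^(p+1)) (sig_minus q (K' - {enum K' p}))) = tau_minus q K'"
    using Suc(1)[of K'] cK' fK' by auto
  have e1: "enum K 1 = x" using enum_insert_min1[OF fK' m] Kx by simp
  have eS: "enum K (Suc p) = enum K' p" if "p \<in> {1..n}" for p
    using enum_insert_min2[OF fK' m, of p] Kx that by simp
  have Y: "K - {enum K (Suc p)} = insert x (K' - {enum K' p})" if "p \<in> {1..n}" for p
  proof -
    have "enum K' p \<in> K'" using enum_in[OF fK'] that cK' by auto
    then have "enum K' p \<noteq> x" using m by auto
    then show ?thesis using eS[OF that] Kx m by auto
  qed
  have fY: "finite (K' - {enum K' p})" for p using fK' by simp
  have mY: "\<forall>y\<in>K' - {enum K' p}. x < y" for p using m by simp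
  have split: "(\<Sum>p=1..Suc n. f p) = f 1 + (\<Sum>p=1..n. f (Suc p))" for f :: "nat \<Rightarrow> ('s,'r) freealg"
  proof -
    have "(\<Sum>p=1..Suc n. f p) = f 1 + (\<Sum>p=Suc 1..Suc n. f p)"
      by (rule sum.atLeast_Suc_atMost) simp
    also have "(\<Sum>p=Suc 1..Suc n. f p) = (\<Sum>p=1..n. f (Suc p))"
      by (rule sum.shift_bounds_cl_Suc_ivl)
    finally show ?thesis .
  qed
  have sgn: "(-1::'r)^(Suc p + 1) = - ((-1)^(p+1))" for p by simp
  have D: "(\<Sum>p=1..n. asmult ((-1)^(Suc p+1)) (tau_minus q (K - {enum K (Suc p)}))) =
      gen x * (\<Sum>p=1..n. asmult ((-1)^(p+1)) (tau_minus q (K' - {enum K' p})))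
      - (\<Sum>p=1..n. asmult ((-1)^(p+1)) (sig_minus q (K' - {enum K' p})))"
    unfolding sum_distrib_left sum_subtractf[symmetric]
    by (rule sum.cong[OF refl]) (simp add: Y tau_insert[OF fY mY] sgn asmult_neg asmult_add
        asmult_uminus asmult_mult_right asmult_diff)
  have E: "(\<Sum>p=1..n. asmult ((-1)^(Suc p+1)) (sig_minus q (K - {enum K (Suc p)}))) =
      - (gen x * (\<Sum>p=1..n. asmult ((-1)^(p+1)) (sig_minus q (K' - {enum K' p}))))
      + asmult q (\<Sum>p=1..n. asmult ((-1)^(p+1)) (tau_minus q (K' - {enum K' p})))"
    unfolding sum_distrib_left asmult_sum sum_negf[symmetric] sum.distrib[symmetric]
    by (rule sum.cong[OF refl]) (simp add: Y sig_insert[OF fY mY] sgn asmult_neg asmult_add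
        asmult_uminus asmult_mult_right asmult_asmult asmult_diff mult.commute)
  have K'e: "K - {x} = K'" using K'_def by simp
  show ?case
    unfolding Suc(2)[symmetric] split e1 K'e D E IH
    using tau_insert[OF fK' m, of q] Kx by (simp add: asmult_one asmult_zero)
qed


lemma tau_abc:
  fixes q :: "'r::comm_ring_1"
  assumes f: "finite Y" and ab: "a < b" and bc: "b < c" and cY: "\<forall>y\<in>Y. c < y"
  shows "tau_minus q (insert a (insert b (insert c Y))) =
     (- (gen a * gen b * gen c) + gen a * Poly_Mapping.single [] q - gen b * Poly_Mapping.single [] q
      + Poly_Mapping.single [] q * gen c) * tau_minus q Y
     + (gen a * gen b - gen a * gen c + gen b * gen c - Poly_Mapping.single [] q) * sig_minus q Y"
proof -
  have f1: "finite (insert c Y)" "finite (insert b (insert c Y))" using f by auto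
  have m1: "\<forall>y\<in>insert c Y. b < y" using bc cY by auto
  have m2: "\<forall>y\<in>insert b (insert c Y). a < y" using ab bc cY by force
  show ?thesis
    unfolding tau_insert[OF f1(2) m2] tau_insert[OF f1(1) m1] sig_insert[OF f1(1) m1]
      tau_insert[OF f cY] sig_insert[OF f cY]
    by (simp add: asmult_eq single_uminus algebra_simps)
qed


theorem lemma3p4:
  fixes q :: "'r::comm_ring_1"
    and J L :: "'s::{finite,linorder} set"
  assumes "card J \<ge> 2"
    and "L \<noteq> {}"
    and "L - {enum L 1} = J - {enum J 1, enum J 2}"
    and "enum J 1 < enum L 1" and "enum L 1 < enum J 2"
  shows "tau_minus q J
      - (gen (enum J 2) \<star> gen (enum L 1) + gen (enum L 1) \<star> gen (enum J 2) - ascal (2 * q))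
          \<star> tau_minus q (L - {enum L 1})
      - tau_minus q {enum J 1, enum J 2} \<star> tau_minus q L
      + (\<Sum>i=3..card J. asmult ((-1) ^ (i + 1)) (tau_minus q ((J \<union> L) - {enum J i})))
    = (0 :: ('s, 'r) freealg)"
proof -
  define a where "a = enum J 1"
  define b where "b = enum L 1"
  define c where "c = enum J 2"
  define K where "K = J - {a, c}"
  let ?xs = "sorted_list_of_set J"
  have fJ: "finite J" by simp
  have fK: "finite K" by simp
  have fL: "finite L" by simp
  have sw: "sorted_wrt (<) ?xs" by (rule strict_sorted_list_of_set)
  have len: "length ?xs = card J" by simp
  have a0: "a = ?xs ! 0" and c1: "c = ?xs ! 1" by (simp_all add: a_def c_def enum_def)
  have ac: "a < c" using sorted_wrt_nth_less[OF sw, of 0 1] a0 c1 len assms(1) by simp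
  have aJ: "a \<in> J" using a0 len assms(1) nth_mem[of 0 ?xs] by simp
  have cJ: "c \<in> J" using c1 len assms(1) nth_mem[of 1 ?xs] by simp
  have cK: "\<forall>y\<in>K. c < y"
  proof
    fix y assume "y \<in> K"
    then have y: "y \<in> J" "y \<noteq> a" "y \<noteq> c" using K_def by auto
    then obtain k where k: "k < length ?xs" "?xs ! k = y"
      by (metis in_set_conv_nth set_sorted_list_of_set fJ)
    have "k \<noteq> 0"
    proof
      assume "k = 0" then show False using k y a0 by simp
    qed
    moreover have "k \<noteq> 1"
    proof
      assume "k = 1" then show False using k y c1 by simp
    qed
    ultimately
    have "1 < k" by simp
    then show "c < y" using sorted_wrt_nth_less[OF sw, of 1 k] k c1 by simp
  qed
  have bc: "b < c" and ab: "a < b" using assms(4,5) a_def b_def c_def by simp_all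
  have Jeq: "J = insert a (insert c K)" using aJ cJ K_def by auto
  have bL: "b \<in> L" using enum_in[OF fL, of 1] assms(2) fL b_def by (simp add: Suc_le_eq card_gt_0_iff)
  have LK: "L - {b} = K" using assms(3) a_def b_def c_def K_def by simp
  have Leq: "L = insert b K" using LK bL by auto
  have bK: "\<forall>y\<in>K. b < y" using cK bc by auto
  have acK: "\<forall>y\<in>insert c K. a < y" using cK ac by force
  have cardJ: "card J = card K + 2" using Jeq cK ac fK by (auto simp: card_insert_if)
  have JL: "J \<union> L = insert a (insert b (insert c K))" using Jeq Leq by auto
  have enumJ: "enum J (p + 2) = enum K p" if "p \<ge> 1" for p
  proof -
    have "enum J (Suc (Suc p)) = enum (insert c K) (Suc p)"
      unfolding Jeq by (rule enum_insert_min2) (use fK acK in auto)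
    also have "\<dots> = enum K p" by (rule enum_insert_min2) (use fK cK that in auto)
    finally show ?thesis by simp
  qed
  have remove: "(J \<union> L) - {enum J (p + 2)} = insert a (insert b (insert c (K - {enum K p})))"
    if "p \<in> {1..card K}" for p
  proof -
    have "enum K p \<in> K" using enum_in[OF fK that] .
    then have "enum K p \<noteq> a" "enum K p \<noteq> b" "enum K p \<noteq> c" using cK bK ac by force+
    moreover have e: "enum J (p + 2) = enum K p" using enumJ[of p] that by simp
    ultimately show ?thesis unfolding JL e by auto
  qed
  define P1 :: "('s,'r) freealg" where "P1 = - (gen a * gen b * gen c) + gen a * Poly_Mapping.single [] q - gen b * Poly_Mapping.single [] q
      + Poly_Mapping.single [] q * gen c"
  define P2 :: "('s,'r) freealg" where "P2 = gen a * gen b - gen a * gen c + gen b * gen c - Poly_Mapping.single [] q"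
  have S: "(\<Sum>i=3..card J. asmult ((-1) ^ (i + 1)) (tau_minus q ((J \<union> L) - {enum J i}))) = P2 * tau_minus q K"
  proof -
    have "(\<Sum>i=3..card J. asmult ((-1) ^ (i + 1)) (tau_minus q ((J \<union> L) - {enum J i}))) =
       (\<Sum>p=1..card K. asmult ((-1) ^ (p + 2 + 1)) (tau_minus q ((J \<union> L) - {enum J (p + 2)})))"
    proof -
      have iv: "{3..card J} = {1+2..card K+2}" using cardJ by simp
      show ?thesis unfolding iv by (rule sum.shift_bounds_cl_nat_ivl)
    qed
    also have "\<dots> = (\<Sum>p=1..card K. P1 * asmult ((-1) ^ (p + 1)) (tau_minus q (K - {enum K p}))
         + P2 * asmult ((-1) ^ (p + 1)) (sig_minus q (K - {enum K p})))"
    proof (rule sum.cong[OF refl])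
      fix p assume p: "p \<in> {1..card K}"
      have "(-1::'r) ^ (p + 2 + 1) = (-1) ^ (p + 1)" by simp
      moreover have "tau_minus q (insert a (insert b (insert c (K - {enum K p})))) =
          P1 * tau_minus q (K - {enum K p}) + P2 * sig_minus q (K - {enum K p})"
        unfolding P1_def P2_def by (rule tau_abc) (use fK ab bc cK in auto)
      ultimately show "asmult ((-1) ^ (p + 2 + 1)) (tau_minus q ((J \<union> L) - {enum J (p + 2)})) =
          P1 * asmult ((-1) ^ (p + 1)) (tau_minus q (K - {enum K p}))
         + P2 * asmult ((-1) ^ (p + 1)) (sig_minus q (K - {enum K p}))"
        using remove[OF p] by (simp add: asmult_add asmult_mult_right)
    qed
    also have "\<dots> = P2 * tau_minus q K"
      using boundary[OF fK, of q] by (simp add: sum.distrib sum_distrib_left[symmetric])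
    finally show ?thesis .
  qed
  have tK: "tau_minus q J = - (gen a * (- (gen c * tau_minus q K) + sig_minus q K))
        + (gen c * sig_minus q K - Poly_Mapping.single [] q * tau_minus q K)"
    unfolding Jeq tau_insert[OF finite_insert[THEN iffD2, OF fK] acK] tau_insert[OF fK cK] sig_insert[OF fK cK]
    by (simp add: fK asmult_eq single_uminus)
  have tac: "tau_minus q {a, c} = gen c - gen a"
  proof -
    have t1: "tau_minus q {c} = (1::('s,'r) freealg)"
      using tau_insert[of "{}" c q] by (simp add: tau_empty sig_empty)
    have s1: "sig_minus q {c} = (gen c::('s,'r) freealg)"
      using sig_insert[of "{}" c q] by (simp add: tau_empty sig_empty asmult_zero)
    have "tau_minus q {a, c} = - (gen a * tau_minus q {c}) + sig_minus q {c}"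
      using tau_insert[of "{c}" a q] ac by simp
    then show ?thesis using t1 s1 by simp
  qed
  have tL: "tau_minus q L = - (gen b * tau_minus q K) + sig_minus q K"
    unfolding Leq by (rule tau_insert[OF fK bK])
  have sc: "ascal (2 * q) = Poly_Mapping.single [] q + (Poly_Mapping.single [] q :: ('s,'r) freealg)"
    unfolding ascal_def mult_2 by (rule single_add)
  show ?thesis
    unfolding amult_eq S a_def[symmetric] b_def[symmetric] c_def[symmetric] tK tac tL LK sc P2_def
    by (simp add: algebra_simps)
qed

end
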